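(* Every symmetric log-concave probability measure $\mu$ on $\mathbb R$ satisfies the dilation inequality for $\mathcal K_s^1(\mathbb R)$ with $\kappa=2$, i.e. $\mu^*(K)\ge-2(1-\mu(K))\log(1-\mu(K))$ for every nonempty symmetric open interval $K\subset\mathbb R$.
   Context: $\mathcal K_s^1(\mathbb R)$: nonempty symmetric open convex subsets of $\mathbb R$. For Borel $A\subset\mathbb R$, $\varepsilon\in(0,1)$: $A_\varepsilon:=A\cup\{x:\exists y,\ \int_0^1\mathbf 1_A((1-t)x+ty)\,dt>1-\varepsilon\}$; $\mu^*(A):=\liminf_{\varepsilon\downarrow0}(\mu(A_\varepsilon)-\mu(A))/\varepsilon$. A measure $\mu$ is log-concave if $\mu((1-t)A+tB)\ge\mu(A)^{1-t}\mu(B)^t$ for all compact $A,B$ and $t\in(0,1)$. *)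

theory Defs
  imports "HOL-Probability.Probability"
begin

definition Ks1 :: "real set set" where
  "Ks1 = {K. K \<noteq> {} \<and> open K \<and> convex K \<and> uminus ` K = K}"

definition dil_set :: "real set \<Rightarrow> real \<Rightarrow> real set" where
  "dil_set A \<epsilon> = A \<union> {x. \<exists>y. (LINT t:{0..1}|lborel. indicator A ((1 - t) * x + t * y)) > 1 - \<epsilon>}"

definition dil_meas :: "real measure \<Rightarrow> real set \<Rightarrow> ereal" where
  "dil_meas \<mu> A = Liminf (at_right 0)
      (\<lambda>\<epsilon>. ereal ((measure \<mu> (dil_set A \<epsilon>) - measure \<mu> A) / \<epsilon>))"

definition symmetric_measure :: "real measure \<Rightarrow> bool" where
  "symmetric_measure \<mu> \<longleftrightarrow> (\<forall>A \<in> sets borel. measure \<mu> (uminus ` A) = measure \<mu> A)"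

definition log_concave_measure :: "real measure \<Rightarrow> bool" where
  "log_concave_measure \<mu> \<longleftrightarrow>
     (\<forall>A B t. compact A \<longrightarrow> compact B \<longrightarrow> 0 < t \<longrightarrow> t < 1 \<longrightarrow>
        measure \<mu> {(1 - t) * a + t * b | a b. a \<in> A \<and> b \<in> B}
          \<ge> measure \<mu> A powr (1 - t) * measure \<mu> B powr t)"

end

theory Submission
  imports Defs
begin


lemma K_cases:
  assumes "K \<in> Ks1"
  shows "K = UNIV \<or> (\<exists>a>0. K = {-a<..<a})"
proof -
  have ne: "K \<noteq> {}" and op: "open K" and cv: "convex K" and sy: "uminus ` K = K"
    using assms by (auto simp: Ks1_def)
  have neg: "-x \<in> K" if "x \<in> K" for x
  proof -
    from that sy have "x \<in> uminus ` K" by simp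
    then obtain z where "z \<in> K" "x = - z" by auto
    thus ?thesis by simp
  qed
  have iv: "\<And>u v x. u \<in> K \<Longrightarrow> v \<in> K \<Longrightarrow> u \<le> x \<Longrightarrow> x \<le> v \<Longrightarrow> x \<in> K"
    using cv unfolding is_interval_convex_1[symmetric] is_interval_1 by blast
  obtain x0 where "x0 \<in> K" using ne by auto
  have z: "0 \<in> K"
    using iv[of "-\<bar>x0\<bar>" "\<bar>x0\<bar>" 0] \<open>x0 \<in> K\<close> neg[OF \<open>x0 \<in> K\<close>]
    by (cases "x0 \<ge> 0") auto
  show ?thesis
  proof (cases "\<forall>x\<ge>0. x \<in> K")
    case True
    have "x \<in> K" for x
    proof (cases "x \<ge> 0")
      case False then have "-x \<in> K" using True by auto
      from neg[OF this] show ?thesis by simp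
    qed (use True in auto)
    then show ?thesis by auto
  next
    case False
    then obtain x1 where x1: "x1 \<ge> 0" "x1 \<notin> K" by auto
    have lt: "y < x1" if "y \<in> K" for y
      using iv[OF z that, of x1] x1 by force
    have bdd: "bdd_above K" using lt by (auto simp: bdd_above_def intro!: exI[of _ x1] less_imp_le)
    define a where "a = Sup K"
    have aK: "a \<notin> K"
    proof
      assume "a \<in> K"
      then obtain e where e: "e > 0" "ball a e \<subseteq> K" using op open_contains_ball by blast
      then have "a + e/2 \<in> K" by (auto simp: dist_real_def)
      then have "a + e/2 \<le> a" unfolding a_def using bdd by (rule cSup_upper)
      thus False using e by simp
    qed
    obtain e where e: "e > 0" "ball 0 e \<subseteq> K" using op z open_contains_ball by blast
    then have "e/2 \<in> K" by (auto simp: dist_real_def)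
    then have "e/2 \<le> a" unfolding a_def using bdd by (rule cSup_upper)
    then have apos: "a > 0" using e by simp
    have "K = {-a<..<a}"
    proof (intro set_eqI iffI)
      fix x assume xK: "x \<in> K"
      have "x \<le> a" "-x \<le> a" unfolding a_def using bdd xK neg[OF xK] by (auto intro: cSup_upper)
      moreover have "x \<noteq> a" "-x \<noteq> a" using aK xK neg[OF xK] by auto
      ultimately show "x \<in> {-a<..<a}" by auto
    next
      fix x assume x: "x \<in> {-a<..<a}"
      have "\<bar>x\<bar> \<in> K"
      proof -
        have "\<bar>x\<bar> < Sup K" using x a_def by auto
        then obtain y where "y \<in> K" "\<bar>x\<bar> < y" using less_cSup_iff[OF ne bdd] by auto
        thus ?thesis using iv[OF z, of y "\<bar>x\<bar>"] by auto
      qed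
      then show "x \<in> K" using neg by (cases "x \<ge> 0") force+
    qed
    then show ?thesis using apos by auto
  qed
qed

definition SS :: "real \<Rightarrow> real \<Rightarrow> real \<Rightarrow> real set" where
  "SS a x y = {t\<in>{0..1}. (1-t)*x+t*y \<in> {-a<..<a}}"

lemma SS_meas: "SS a x y \<in> sets lborel"
  unfolding SS_def by measurable

lemma SS_fmeas: "SS a x y \<in> fmeasurable lborel"
proof (rule fmeasurableI2[of "{0..1}"])
  show "{0..1::real} \<in> fmeasurable lborel" by (simp add: fmeasurable_def)
  show "SS a x y \<subseteq> {0..1}" by (auto simp: SS_def)
  show "SS a x y \<in> sets lborel" by (rule SS_meas)
qed

lemma int_SS:
  "(LINT t:{0..1}|lborel. indicator {-a<..<a} ((1 - t) * x + t * y)) = measure lborel (SS a x y)"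
proof -
  have "(LINT t:{0..1}|lborel. indicator {-a<..<a} ((1 - t) * x + t * y)) =
     (LINT t|lborel. indicator (SS a x y) t)"
    unfolding set_lebesgue_integral_def
    by (rule Bochner_Integration.integral_cong) (auto simp: SS_def split: split_indicator)
  also have "\<dots> = measure lborel (SS a x y)" by simp
  finally show ?thesis .
qed

lemma SS_neg: "SS a (-x) (-y) = SS a x y"
  unfolding SS_def by auto



lemma SS_lower:
  assumes "a > 0" "x \<ge> a"
  shows "measure lborel (SS a x (-a)) \<ge> 2*a/(x+a)"
proof -
  define c where "c = (x-a)/(x+a)"
  have c0: "c \<ge> 0" "c < 1" using assms by (auto simp: c_def field_simps)
  have sub: "{c<..<1} \<subseteq> SS a x (-a)"
  proof
    fix t assume t: "t \<in> {c<..<1}"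
    then have "t*(x+a) > x - a" using assms by (auto simp: c_def field_simps)
    moreover have "t*(x+a) < x + a" using t assms by simp
    ultimately show "t \<in> SS a x (-a)" using t c0 assms by (auto simp: SS_def algebra_simps)
  qed
  have "measure lborel {c<..<1} = 1 - c" using c0 by simp
  also have "1 - c = 2*a/(x+a)" using assms by (simp add: c_def field_simps)
  finally show ?thesis
    using measure_mono_fmeasurable[OF sub _ SS_fmeas] by simp
qed

lemma SS_upper:
  assumes "a > 0" "x \<ge> a"
  shows "measure lborel (SS a x y) \<le> 2*a/(x+a)"
proof (cases "y < x")
  case False
  have "SS a x y = {}"
  proof -
    have "(1-t)*x+t*y \<ge> x" if "t \<ge> 0" for t
    proof -
      have "t*y \<ge> t*x" using False that by (simp add: mult_left_mono)
      thus ?thesis by (simp add: algebra_simps)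
    qed
    thus ?thesis using assms by (force simp: SS_def)
  qed
  thus ?thesis using assms by simp
next
  case True
  define d where "d = x - y"
  have d: "d > 0" using True d_def by simp
  define p where "p = (x-a)/d"
  define q where "q = min 1 ((x+a)/d)"
  have sub: "SS a x y \<subseteq> {p<..q}"
  proof
    fix t assume "t \<in> SS a x y"
    then have t: "0 \<le> t" "t \<le> 1" "x - t*d < a" "x - t*d > -a"
      by (auto simp: SS_def d_def algebra_simps)
    have "t > p" using t d by (simp add: p_def field_simps)
    moreover have "t < (x+a)/d" using t d by (simp add: field_simps)
    ultimately show "t \<in> {p<..q}" using t by (simp add: q_def)
  qed
  have bnd: "q - p \<le> 2*a/(x+a)"
  proof (cases "d \<ge> x + a")
    case True
    have "q - p \<le> (x+a)/d - (x-a)/d" by (simp add: q_def p_def)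
    also have "\<dots> = 2*a/d" using d by (simp add: field_simps)
    also have "\<dots> \<le> 2*a/(x+a)" using True assms d by (intro divide_left_mono) auto
    finally show ?thesis .
  next
    case False
    have "q - p \<le> 1 - (x-a)/d" by (simp add: q_def p_def)
    also have "(x-a)/d \<ge> (x-a)/(x+a)" using False assms d by (intro divide_left_mono) auto
    hence "1 - (x-a)/d \<le> 1 - (x-a)/(x+a)" by simp
    also have "\<dots> = 2*a/(x+a)" using assms by (simp add: field_simps)
    finally show ?thesis by simp
  qed
  show ?thesis
  proof (cases "p \<le> q")
    case True
    have "measure lborel (SS a x y) \<le> measure lborel {p<..q}"
      using sub SS_meas[of a x y] True by (intro measure_mono_fmeasurable) (auto simp: fmeasurable_def ennreal_less_top)
    also have "\<dots> = q - p" using True by simp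
    finally show ?thesis using bnd by simp
  next
    case False
    then have "SS a x y = {}" using sub by auto
    thus ?thesis using assms by simp
  qed
qed

lemma dil_eq:
  assumes "a > 0" "0 < e" "e < 1"
  shows "dil_set {-a<..<a} e = {-(a*(1+e)/(1-e))<..<a*(1+e)/(1-e)}"
proof -
  define s where "s = a*(1+e)/(1-e)"
  have sa: "s > a" using assms by (simp add: s_def field_simps)
  have key: "2*a/(x+a) > 1 - e \<longleftrightarrow> x < s" if "x \<ge> a" for x
    using that assms by (simp add: s_def field_simps)
  have D: "dil_set {-a<..<a} e = {-a<..<a} \<union> {x. \<exists>y. measure lborel (SS a x y) > 1 - e}"
    unfolding dil_set_def int_SS ..
  have "x \<in> dil_set {-a<..<a} e \<longleftrightarrow> x \<in> {-s<..<s}" for x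
  proof (cases "\<bar>x\<bar> < a")
    case True then show ?thesis using sa D by auto
  next
    case False
    define z where "z = \<bar>x\<bar>"
    have za: "z \<ge> a" using False z_def by simp
    have "(\<exists>y. measure lborel (SS a x y) > 1 - e) \<longleftrightarrow> (\<exists>y. measure lborel (SS a z y) > 1 - e)"
    proof (cases "x \<ge> 0")
      case True thus ?thesis by (simp add: z_def)
    next
      case False
      have "SS a x y = SS a z (-y)" for y using SS_neg[of a x y, symmetric] False z_def by simp
      then show ?thesis by (metis minus_minus)
    qed
    also have "\<dots> \<longleftrightarrow> z < s"
    proof
      assume "\<exists>y. measure lborel (SS a z y) > 1 - e"
      then obtain y where "measure lborel (SS a z y) > 1 - e" by auto
      with SS_upper[OF assms(1) za, of y] have "2*a/(z+a) > 1 - e" by simp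
      thus "z < s" using key[OF za] by simp
    next
      assume "z < s"
      then have "2*a/(z+a) > 1 - e" using key[OF za] by simp
      then show "\<exists>y. measure lborel (SS a z y) > 1 - e"
        using SS_lower[OF assms(1) za] by (intro exI[of _ "-a"]) simp
    qed
    finally show ?thesis using D False z_def by auto
  qed
  then show ?thesis unfolding s_def by blast
qed



lemma lim_Icc:
  fixes \<mu> :: "real measure" and s c :: real
  assumes fm: "finite_measure \<mu>" and SB: "sets \<mu> = sets borel"
  shows "(\<lambda>n. measure \<mu> {c..s + real n}) \<longlonglongrightarrow> measure \<mu> {c..}"
proof -
    have inc: "incseq (\<lambda>n. {c..s + real n})"
      unfolding incseq_def
    proof (intro allI impI)
      fix m n :: nat assume "m \<le> n"
      then have "s + real m \<le> s + real n" by simp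
      then show "{c..s + real m} \<subseteq> {c..s + real n}" by simp
    qed
    have rng: "range (\<lambda>n. {c..s + real n}) \<subseteq> sets \<mu>" unfolding SB by (intro image_subsetI) simp
    have "(\<lambda>n. measure \<mu> {c..s + real n}) \<longlonglongrightarrow> measure \<mu> (\<Union>n. {c..s + real n})"
      by (rule finite_measure.finite_Lim_measure_incseq[OF fm rng inc])
    moreover have "(\<Union>n. {c..s + real n}) = {c..}"
    proof (intro set_eqI iffI)
      fix x :: real assume x: "x \<in> {c..}"
      obtain n :: nat where "real n \<ge> x - s" using real_arch_simple[of "x - s"] by blast
      then have "x \<in> {c..s + real n}" using x by simp
      then show "x \<in> (\<Union>n. {c..s + real n})" by blast
    qed simp
    ultimately show ?thesis by simp
qed

context
  fixes \<mu> :: "real measure"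
  assumes P: "prob_space \<mu>" and SB: "sets \<mu> = sets borel" and SY: "symmetric_measure \<mu>"
begin

lemma sp: "space \<mu> = UNIV" using sets_eq_imp_space_eq[OF SB] by simp

lemma fm: "finite_measure \<mu>" using P by (simp add: prob_space.finite_measure)

lemma half: "measure \<mu> {0..} \<ge> 1/2"
proof -
  have "measure \<mu> (uminus ` {0::real..}) = measure \<mu> {0..}"
    using SY unfolding symmetric_measure_def by (meson atLeast_borel)
  moreover have "uminus ` {0::real..} = {..0}"
    by (auto simp: image_iff intro!: bexI[of _ "-x" for x])
  ultimately have e: "measure \<mu> {..0} = measure \<mu> {0..}" by simp
  have "1 = measure \<mu> ({0..} \<union> {..0})"
  proof -
    have "{0..} \<union> {..0} = (UNIV::real set)" by auto
    thus ?thesis using prob_space.prob_space[OF P] sp by simp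
  qed
  also have "\<dots> \<le> measure \<mu> {0..} + measure \<mu> {..0}"
    using SB finite_measure.emeasure_finite[OF fm] by (intro measure_subadditive) auto
  finally show ?thesis using e by simp
qed

lemma compl: assumes "a > 0"
  shows "1 - measure \<mu> {-a<..<a} = 2 * measure \<mu> {a..}"
proof -
  have "measure \<mu> (uminus ` {a..}) = measure \<mu> {a..}"
    using SY unfolding symmetric_measure_def by (meson atLeast_borel)
  moreover have "uminus ` {a::real..} = {.. -a}"
    by (auto simp: image_iff intro!: bexI[of _ "-x" for x])
  ultimately have e: "measure \<mu> {.. -a} = measure \<mu> {a..}" by simp
  have u: "UNIV - {-a<..<a} = {.. -a} \<union> {a..}" by auto
  have "1 - measure \<mu> {-a<..<a} = measure \<mu> (space \<mu> - {-a<..<a})"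
    using prob_space.prob_compl[OF P, of "{-a<..<a}"] SB by simp
  also have "\<dots> = measure \<mu> {.. -a} + measure \<mu> {a..}"
    unfolding sp u using SB assms by (intro finite_measure.finite_measure_Union[OF fm]) auto
  finally show ?thesis using e by simp
qed

lemma tail_ineq:
  assumes LC: "log_concave_measure \<mu>" and r: "0 < r" "r < s"
  shows "2 * measure \<mu> {r..} \<ge> (2 * measure \<mu> {s..}) powr (r/s)"
proof -
  define l where "l = r/s"
  have l: "0 < l" "l < 1" "r = l * s" using r by (auto simp: l_def)
  have approx: "measure \<mu> {r..} \<ge> measure \<mu> {0..R} powr (1-l) * measure \<mu> {s..R} powr l"
    if R: "R \<ge> s" for R
  proof -
    let ?C = "{(1 - l) * a + l * b | a b. a \<in> {0..R} \<and> b \<in> {s..R}}"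
    have C: "?C = (\<lambda>x. (1-l)*fst x + l * snd x) ` ({0..R} \<times> {s..R})"
      by (auto simp: image_def Bex_def)
    have "compact ?C" unfolding C
      by (intro compact_continuous_image compact_Times) (auto intro!: continuous_intros)
    then have Cm: "?C \<in> sets \<mu>" using SB by (simp add: borel_compact)
    have sub: "?C \<subseteq> {r..}"
    proof
      fix z assume "z \<in> ?C"
      then obtain a b where z: "z = (1-l)*a + l*b" "a \<ge> 0" "b \<ge> s" by auto
      have "(1-l)*a \<ge> 0" using l z by simp
      moreover have "l*b \<ge> l * s" using l z by (simp add: mult_left_mono)
      ultimately show "z \<in> {r..}" using z l by (simp only: atLeast_iff)
    qed
    have "measure \<mu> {0..R} powr (1-l) * measure \<mu> {s..R} powr l \<le> measure \<mu> ?C"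
    proof -
      have "\<forall>A B t. compact A \<longrightarrow> compact B \<longrightarrow> 0 < t \<longrightarrow> t < 1 \<longrightarrow>
        measure \<mu> {(1 - t) * a + t * b | a b. a \<in> A \<and> b \<in> B}
          \<ge> measure \<mu> A powr (1 - t) * measure \<mu> B powr t"
        using LC unfolding log_concave_measure_def by blast
      from this[rule_format, OF compact_Icc compact_Icc l(1) l(2)] show ?thesis .
    qed
    also have "\<dots> \<le> measure \<mu> {r..}"
      using finite_measure.finite_measure_mono[OF fm sub] SB by simp
    finally show ?thesis .
  qed
  have lim1: "(\<lambda>n. measure \<mu> {0..s + real n}) \<longlonglongrightarrow> measure \<mu> {0..}"
    by (rule lim_Icc[OF fm SB])
  have lim2: "(\<lambda>n. measure \<mu> {s..s + real n}) \<longlonglongrightarrow> measure \<mu> {s..}"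
    by (rule lim_Icc[OF fm SB])
  have lim: "(\<lambda>n. measure \<mu> {0..s + real n} powr (1-l) * measure \<mu> {s..s + real n} powr l)
      \<longlonglongrightarrow> measure \<mu> {0..} powr (1-l) * measure \<mu> {s..} powr l"
    using l by (intro tendsto_mult tendsto_powr' lim1 lim2 tendsto_const) auto
  have T: "measure \<mu> {r..} \<ge> measure \<mu> {0..} powr (1-l) * measure \<mu> {s..} powr l"
    by (rule LIMSEQ_le_const2[OF lim]) (use approx in auto)
  have "(1/2) powr (1-l) * measure \<mu> {s..} powr l \<le> measure \<mu> {0..} powr (1-l) * measure \<mu> {s..} powr l"
    using half l by (intro mult_right_mono powr_mono2) auto
  with T have T2: "measure \<mu> {r..} \<ge> (1/2) powr (1-l) * measure \<mu> {s..} powr l" by simp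
  have "(2 * measure \<mu> {s..}) powr l = 2 powr l * measure \<mu> {s..} powr l"
    by (simp add: powr_mult)
  also have "2 powr l = 2 * (1/2) powr (1-l)"
    by (simp add: powr_diff powr_divide)
  finally show ?thesis using T2 unfolding l_def[symmetric] by simp
qed

end


lemma phi_lim:
  fixes G :: real
  assumes G: "0 < G"
  shows "((\<lambda>e. (G - G powr ((1+e)/(1-e)))/e) \<longlongrightarrow> -2*G*ln G) (at_right 0)"
proof -
  define g where "g e = exp (((1+e)/(1-e)) * ln G)" for e :: real
  have gd: "(g has_field_derivative (exp (((1+0)/(1-0)) * ln G) * (2 * ln G))) (at 0)"
    unfolding g_def
    by (rule derivative_eq_intros refl | simp)+
  have "(g has_field_derivative 2 * G * ln G) (at 0)"
    using gd G by (simp add: mult.assoc mult.left_commute)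
  then have "((\<lambda>y. (g y - g 0) / (y - 0)) \<longlongrightarrow> 2 * G * ln G) (at 0)"
    by (simp add: has_field_derivative_iff)
  then have "((\<lambda>y. (g y - g 0) / (y - 0)) \<longlongrightarrow> 2 * G * ln G) (at_right 0)"
    by (rule filterlim_mono) (simp_all add: at_le)
  then have "((\<lambda>y. - ((g y - g 0) / (y - 0))) \<longlongrightarrow> - (2 * G * ln G)) (at_right 0)"
    by (rule tendsto_minus)
  moreover have "- ((g y - g 0) / (y - 0)) = (G - G powr ((1+y)/(1-y)))/y" for y
    using G by (simp add: g_def powr_def minus_divide_left algebra_simps)
  ultimately show ?thesis by simp
qed

theorem propositionp:
  fixes \<mu> :: "real measure"
  assumes "prob_space \<mu>" and "sets \<mu> = sets borel"
    and "symmetric_measure \<mu>" and "log_concave_measure \<mu>"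
    and "K \<in> Ks1"
  shows "dil_meas \<mu> K \<ge> ereal (- 2 * (1 - measure \<mu> K) * ln (1 - measure \<mu> K))"
proof -
  note P = assms(1) and SB = assms(2) and SY = assms(3) and LC = assms(4)
  have ntriv: "at_right (0::real) \<noteq> bot" by simp
  from K_cases[OF assms(5)] show ?thesis
  proof
    assume KU: "K = UNIV"
    have m1: "measure \<mu> K = 1" using prob_space.prob_space[OF P] sp[OF P SB SY] KU by simp
    have "dil_set K e = UNIV" for e unfolding dil_set_def KU by simp
    then have "dil_meas \<mu> K = Liminf (at_right (0::real)) (\<lambda>e. ereal 0)"
      unfolding dil_meas_def using m1 KU by simp
    also have "\<dots> = 0" using ntriv by (simp add: Liminf_const)
    finally show ?thesis using m1 by simp
  next
    assume "\<exists>a>0. K = {-a<..<a}"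
    then obtain a where a: "a > 0" and Ka: "K = {-a<..<a}" by auto
    define G where "G = 1 - measure \<mu> K"
    have G2: "G = 2 * measure \<mu> {a..}" unfolding G_def Ka by (rule compl[OF P SB SY a])
    have G0: "G \<ge> 0" using G2 by simp
    define f where "f e = (measure \<mu> (dil_set K e) - measure \<mu> K) / e" for e
    define \<phi> where "\<phi> e = (G - G powr ((1+e)/(1-e)))/e" for e
    have bound: "\<phi> e \<le> f e" if e: "0 < e" "e < 1" for e
    proof -
      define s where "s = a*(1+e)/(1-e)"
      have sa: "s > a" using a e by (simp add: s_def field_simps)
      have dil: "dil_set K e = {-s<..<s}" unfolding Ka s_def by (rule dil_eq[OF a e])
      define H where "H = 2 * measure \<mu> {s..}"
      have H0: "H \<ge> 0" by (simp add: H_def)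
      have Hm: "H = 1 - measure \<mu> {-s<..<s}" unfolding H_def using compl[OF P SB SY, of s] sa a by simp
      have ti: "G \<ge> H powr (a/s)" unfolding G2 H_def by (rule tail_ineq[OF P SB SY LC a sa])
      have as: "a/s = (1-e)/(1+e)"
      proof -
        have "a/s = (a*(1-e))/(a*(1+e))" unfolding s_def by simp
        also have "\<dots> = (1-e)/(1+e)" using a by (rule mult_divide_mult_cancel_left[OF less_imp_neq[symmetric]])
        finally show ?thesis .
      qed
      have "H = (H powr (a/s)) powr ((1+e)/(1-e))"
        using e H0 by (simp add: powr_powr as)
      also have "\<dots> \<le> G powr ((1+e)/(1-e))"
        using ti e H0 by (intro powr_mono2) auto
      finally have HG: "H \<le> G powr ((1+e)/(1-e))" .
      have "f e = (G - H) / e" unfolding f_def dil Hm G_def by simp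
      moreover have "(G - G powr ((1+e)/(1-e))) / e \<le> (G - H) / e"
        using HG e by (intro divide_right_mono) auto
      ultimately show ?thesis unfolding \<phi>_def by simp
    qed
    have lim: "(\<phi> \<longlongrightarrow> -2*G*ln G) (at_right 0)"
    proof (cases "G = 0")
      case True
      then have "\<phi> = (\<lambda>_. 0)" by (intro ext) (simp add: \<phi>_def)
      then show ?thesis using True by simp
    next
      case False
      then have "G > 0" using G0 by simp
      from phi_lim[OF this] show ?thesis unfolding \<phi>_def[abs_def] by simp
    qed
    have ev: "eventually (\<lambda>e. ereal (\<phi> e) \<le> ereal (f e)) (at_right 0)"
      unfolding eventually_at_right_field
      by (rule exI[of _ 1]) (use bound in auto)
    have "ereal (-2*G*ln G) = Liminf (at_right 0) (\<lambda>e. ereal (\<phi> e))"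
      using lim_imp_Liminf[OF ntriv[simplified trivial_limit_def[symmetric]] tendsto_ereal[OF lim]] by simp
    also have "\<dots> \<le> Liminf (at_right 0) (\<lambda>e. ereal (f e))"
      by (rule Liminf_mono[OF ev])
    also have "\<dots> = dil_meas \<mu> K" unfolding dil_meas_def f_def ..
    finally show ?thesis unfolding G_def by simp
  qed
qed


end
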